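(* Consider plain SGD (no momentum) with scalar learning rate $\lambda>0$ and batch size $S$ on $L_2$-regularized linear regression in the limit $N\to\infty$, with $[A,\Gamma]=0$. Let $K:=A+\Gamma$, $U:=\mathbf{u}\mathbf{u}^{\mathrm T}$, $G:=2I_D-\lambda\left(K+\frac1SK^{-1}A^2\right)$, $\kappa:=\frac{\mathrm{Tr}[A^2K^{-1}G^{-1}]}{1-\frac\lambda S\mathrm{Tr}[A^2K^{-1}G^{-1}]}$, $r:=\frac{\mathrm{Tr}[A^3K^{-3}\Gamma^2G^{-1}U]}{1-\frac\lambda S\mathrm{Tr}[A^2K^{-1}G^{-1}]}$ (with $K,G$ invertible and the denominator nonzero). Then the expected test loss $L_{\rm test}:=\frac12\mathbb{E}_{\mathbf{w}}[(\mathbf{w}-\mathbf{u})^{\mathrm T}A(\mathbf{w}-\mathbf{u})]$ is $$L_{\rm test}=\frac{\lambda}{2S}\left(\mathrm{Tr}[AK^{-2}\Gamma^2U]\kappa+r\right)+\frac12\mathrm{Tr}[AK^{-2}\Gamma^2U].$$ Moreover, if $A$, $\Gamma$ and $U$ pairwise commute, then $$\Sigma=\frac\lambda S\mathrm{Tr}[AK^{-2}\Gamma^2U]\left(1+\frac{\lambda\kappa}{S}\right)AK^{-1}G^{-1}+\frac\lambda S\left(A^2K^{-2}\Gamma^2U+\frac{\lambda r}{S}A\right)K^{-1}G^{-1}.$$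
   Context: Data: $x_i\in\mathbb{R}^D$ i.i.d. $\mathcal N(0,A)$, $A$ symmetric positive definite; labels $y_i=\mathbf{u}^{\mathrm T}x_i$; $\Gamma$ symmetric. Loss $L_\Gamma(\mathbf{w})=\frac{1}{2N}\sum_i[(\mathbf{w}-\mathbf{u})^{\mathrm T}x_i]^2+\frac12\mathbf{w}^{\mathrm T}\Gamma\mathbf{w}$, whose Hessian is $K=A+\Gamma$ as $N\to\infty$. SGD: $\mathbf{w}_t=\mathbf{w}_{t-1}-\frac\lambda S\sum_{i\in B_t}\nabla\ell_i(\mathbf{w}_{t-1})$. The stationary distribution has mean $\mathbf{w}^*=K^{-1}A\mathbf{u}$ and covariance $\Sigma:=\mathbb{E}_{\mathbf{w}}[(\mathbf{w}-\mathbf{w}^* )(\mathbf{w}-\mathbf{w}^* )^{\mathrm T}]$, determined by the stationarity equation $\lambda(K\Sigma+\Sigma K)-\lambda^2K\Sigma K=\lambda^2C$, where the averaged minibatch noise covariance is $C=\frac1S\big(A\Sigma A+\mathrm{Tr}[A\Sigma]A+\mathrm{Tr}[AK^{-2}\Gamma^2U]A+AK^{-1}\Gamma U\Gamma K^{-1}A\big)$. *)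

theory Defs
  imports "HOL-Analysis.Analysis" "HOL-Probability.Probability"
begin

definition outer :: "real^'n \<Rightarrow> real^'n \<Rightarrow> real^'n^'n" where
  "outer u v = (\<chi> i j. u$i * v$j)"

text \<open>Averaged minibatch noise covariance C (N to infinity limit), as a function of Sigma.
  Arguments: A, Gamma, u, batch size S, Sigma.\<close>
definition noise_cov :: "real^'n^'n \<Rightarrow> real^'n^'n \<Rightarrow> real^'n \<Rightarrow> nat \<Rightarrow> real^'n^'n \<Rightarrow> real^'n^'n" where
  "noise_cov A \<Gamma> u S \<Sigma> =
     (let K = A + \<Gamma>; Ki = matrix_inv K; U = outer u u in
      (1 / real S) *\<^sub>R
        (A ** \<Sigma> ** A + trace (A ** \<Sigma>) *\<^sub>R A
         + trace (A ** Ki ** Ki ** \<Gamma> ** \<Gamma> ** U) *\<^sub>R A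
         + A ** Ki ** \<Gamma> ** U ** \<Gamma> ** Ki ** A))"

definition stationary_eq :: "real^'n^'n \<Rightarrow> real^'n^'n \<Rightarrow> real^'n \<Rightarrow> real \<Rightarrow> nat \<Rightarrow> real^'n^'n \<Rightarrow> bool" where
  "stationary_eq A \<Gamma> u lr S \<Sigma> \<longleftrightarrow>
     (let K = A + \<Gamma> in
      lr *\<^sub>R (K ** \<Sigma> + \<Sigma> ** K) - lr\<^sup>2 *\<^sub>R (K ** \<Sigma> ** K)
        = lr\<^sup>2 *\<^sub>R noise_cov A \<Gamma> u S \<Sigma>)"

end

theory Submission
  imports Defs
begin


type_synonym 'n sqm = "real^'n^'n"

lemma mm_add_rdistrib: "((A::real^'n^'n) + B) ** C = A ** C + B ** C"
  by (simp add: matrix_matrix_mult_def vec_eq_iff sum.distrib distrib_right)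
lemma mm_add_ldistrib: "(C::real^'n^'n) ** (A + B) = C ** A + C ** B"
  by (simp add: matrix_add_ldistrib)
lemma mm_diff_rdistrib: "((A::real^'n^'n) - B) ** C = A ** C - B ** C"
  by (simp add: matrix_matrix_mult_def vec_eq_iff sum_subtractf left_diff_distrib)
lemma mm_diff_ldistrib: "(C::real^'n^'n) ** (A - B) = C ** A - C ** B"
  by (simp add: matrix_matrix_mult_def vec_eq_iff sum_subtractf right_diff_distrib)
lemma mm_scaleR_left: "(c *\<^sub>R (A::real^'n^'n)) ** B = c *\<^sub>R (A ** B)"
  by (simp add: scalar_matrix_assoc)
lemma mm_scaleR_right: "(A::real^'n^'n) ** (c *\<^sub>R B) = c *\<^sub>R (A ** B)"
  by (simp add: matrix_matrix_mult_def vec_eq_iff sum_distrib_left mult_ac)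
lemma trace_scaleR: "trace (c *\<^sub>R (A::real^'n^'n)) = c * trace A"
  by (simp add: trace_def sum_distrib_left)
lemma transpose_add': "transpose ((A::real^'n^'n) + B) = transpose A + transpose B"
  by (simp add: transpose_def vec_eq_iff)
lemma transpose_diff': "transpose ((A::real^'n^'n) - B) = transpose A - transpose B"
  by (simp add: transpose_def vec_eq_iff)

lemmas mm_lin = mm_add_rdistrib mm_add_ldistrib mm_diff_rdistrib mm_diff_ldistrib
  mm_scaleR_left mm_scaleR_right

lemma inv_props:
  assumes "invertible (B::real^'n^'n)"
  shows "B ** matrix_inv B = mat 1" "matrix_inv B ** B = mat 1"
proof -
  have "\<exists>B'. B ** B' = mat 1 \<and> B' ** B = mat 1" using assms by (simp add: invertible_def)
  then have "B ** matrix_inv B = mat 1 \<and> matrix_inv B ** B = mat 1"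
    unfolding matrix_inv_def by (rule someI_ex)
  then show "B ** matrix_inv B = mat 1" "matrix_inv B ** B = mat 1" by auto
qed

lemma inv_comm:
  assumes "invertible (B::real^'n^'n)" "A ** B = B ** A"
  shows "A ** matrix_inv B = matrix_inv B ** A"
proof -
  let ?Bi = "matrix_inv B"
  have "?Bi ** (A ** B) ** ?Bi = ?Bi ** (B ** A) ** ?Bi" using assms(2) by simp
  moreover have "?Bi ** (A ** B) ** ?Bi = ?Bi ** A"
    by (metis inv_props(1)[OF assms(1)] matrix_mul_assoc matrix_mul_rid)
  moreover have "?Bi ** (B ** A) ** ?Bi = A ** ?Bi"
    by (metis inv_props(2)[OF assms(1)] matrix_mul_assoc matrix_mul_lid)
  ultimately show ?thesis by simp
qed

lemma inv_sym:
  assumes "invertible (B::real^'n^'n)" "transpose B = B"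
  shows "transpose (matrix_inv B) = matrix_inv B"
proof -
  let ?Bi = "matrix_inv B"
  have "transpose ?Bi ** B = mat 1"
    by (metis assms(2) inv_props(1)[OF assms(1)] matrix_transpose_mul transpose_mat)
  then have "transpose ?Bi = transpose ?Bi ** (B ** ?Bi)" using inv_props(1)[OF assms(1)] by simp
  also have "\<dots> = ?Bi" by (metis \<open>transpose ?Bi ** B = mat 1\<close> matrix_mul_assoc matrix_mul_lid)
  finally show ?thesis .
qed

lemma neg_quad: "(- y) \<bullet> ((B::real^'n^'n) *v (- y)) = y \<bullet> (B *v y)"
  by (simp add: inner_vec_def matrix_vector_mult_def sum_negf)

lemma two_mat: "2 * (X::real^'n^'n) = 2 *\<^sub>R X" "X * 2 = 2 *\<^sub>R X"
  by (simp_all add: vec_eq_iff scaleR_vec_def)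

lemma swap2: "(X::real^'n^'n) ** Y = Y ** X \<Longrightarrow> Z ** X ** Y = Z ** Y ** X"
  by (metis matrix_mul_assoc)
lemma canc2: "(X::real^'n^'n) ** Y = mat 1 \<Longrightarrow> Z ** X ** Y = Z"
  by (metis matrix_mul_assoc matrix_mul_rid)

lemma trace_outer: "trace (X ** outer u u) = u \<bullet> (X *v u)"
  by (simp add: trace_def matrix_matrix_mult_def outer_def inner_vec_def matrix_vector_mult_def
      sum_distrib_left mult_ac)

lemma comm_sum: "X ** (Y::real^'n^'n) = Y ** X \<Longrightarrow> X ** Z = Z ** X \<Longrightarrow> X ** (Y + Z) = (Y + Z) ** X"
  by (simp add: mm_lin)
lemma comm_diff: "X ** (Y::real^'n^'n) = Y ** X \<Longrightarrow> X ** Z = Z ** X \<Longrightarrow> X ** (Y - Z) = (Y - Z) ** X"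
  by (simp add: mm_lin)
lemma comm_scale: "X ** (Y::real^'n^'n) = Y ** X \<Longrightarrow> X ** (c *\<^sub>R Y) = (c *\<^sub>R Y) ** X"
  by (simp add: mm_lin)
lemma comm_mul: "X ** (Y::real^'n^'n) = Y ** X \<Longrightarrow> X ** Z = Z ** X \<Longrightarrow> X ** (Y ** Z) = (Y ** Z) ** X"
  by (metis matrix_mul_assoc)
lemma comm_mat: "X ** mat 1 = mat 1 ** (X::real^'n^'n)" by simp
lemma comm_refl: "X ** X = X ** (X::real^'n^'n)" by simp



lemma int_quad:
  fixes M :: "(real^'n) measure" and A \<Sigma> :: "real^'n^'n" and m u :: "real^'n"
  assumes M_prob: "prob_space M"
    and int1: "\<And>i. integrable M (\<lambda>w. w$i)"
    and int2: "\<And>i j. integrable M (\<lambda>w. w$i * w$j)"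
    and mean: "\<And>i. (\<integral>w. w$i \<partial>M) = m$i"
    and cov: "\<And>i j. (\<integral>w. (w$i - m$i) * (w$j - m$j) \<partial>M) = \<Sigma>$i$j"
    and Sigma_sym: "transpose \<Sigma> = \<Sigma>"
  shows "(\<integral>w. (w - u) \<bullet> (A *v (w - u)) \<partial>M) = trace (A ** \<Sigma>) + (m - u) \<bullet> (A *v (m - u))"
proof -
  interpret prob_space M by (rule M_prob)
  have gen: "(\<integral>w. (w$i - a) * (w$j - b) \<partial>M) = (\<integral>w. w$i * w$j \<partial>M) - b * m$i - a * m$j + a * b"
    for i j a b
  proof -
    have eq: "(\<lambda>w. (w$i - a) * (w$j - b)) = (\<lambda>w. w$i * w$j - b * w$i - a * w$j + a * b)"
      by (auto simp: algebra_simps)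
    show ?thesis unfolding eq
      using int1 int2 mean by (simp add: integrable_diff integrable_add prob_space)
  qed
  have sq: "(\<integral>w. (w$i - u$i) * (w$j - u$j) \<partial>M) = \<Sigma>$i$j + (m$i - u$i) * (m$j - u$j)" for i j
    using gen[of i "u$i" j "u$j"] gen[of i "m$i" j "m$j"] cov[of i j] by (simp add: algebra_simps)
  have intij: "integrable M (\<lambda>w. (w$i - u$i) * (w$j - u$j))" for i j
  proof -
    have eq: "(\<lambda>w. (w$i - u$i) * (w$j - u$j)) = (\<lambda>w. w$i * w$j - u$j * w$i - u$i * w$j + u$i * u$j)"
      by (auto simp: algebra_simps)
    show ?thesis unfolding eq using int1 int2 by simp
  qed
  have expand: "(w - u) \<bullet> (A *v (w - u)) = (\<Sum>i\<in>UNIV. \<Sum>j\<in>UNIV. A$i$j * ((w$i - u$i) * (w$j - u$j)))" for w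
    by (simp add: inner_vec_def matrix_vector_mult_def sum_distrib_left mult_ac)
  have "(\<integral>w. (w - u) \<bullet> (A *v (w - u)) \<partial>M) = (\<Sum>i\<in>UNIV. \<Sum>j\<in>UNIV. A$i$j * (\<integral>w. (w$i - u$i) * (w$j - u$j) \<partial>M))"
    unfolding expand using intij by (simp add: integral_sum)
  also have "\<dots> = (\<Sum>i\<in>UNIV. \<Sum>j\<in>UNIV. A$i$j * \<Sigma>$i$j) + (\<Sum>i\<in>UNIV. \<Sum>j\<in>UNIV. A$i$j * ((m$i - u$i) * (m$j - u$j)))"
    unfolding sq by (simp add: distrib_left sum.distrib)
  also have "(\<Sum>i\<in>UNIV. \<Sum>j\<in>UNIV. A$i$j * \<Sigma>$i$j) = trace (A ** \<Sigma>)"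
  proof -
    have "\<Sigma>$j$i = \<Sigma>$i$j" for i j using Sigma_sym by (metis transpose_def vec_lambda_beta)
    then show ?thesis by (simp add: trace_def matrix_matrix_mult_def)
  qed
  also have "(\<Sum>i\<in>UNIV. \<Sum>j\<in>UNIV. A$i$j * ((m$i - u$i) * (m$j - u$j))) = (m - u) \<bullet> (A *v (m - u))"
    by (simp add: inner_vec_def matrix_vector_mult_def sum_distrib_left mult_ac)
  finally show ?thesis .
qed


theorem theorem3:
  fixes A \<Gamma> \<Sigma> :: "real^'n^'n" and u :: "real^'n" and lr :: real and S :: nat
    and M :: "(real^'n) measure"
  defines "K \<equiv> A + \<Gamma>"
  defines "U \<equiv> outer u u"
  defines "G \<equiv> 2 *\<^sub>R mat 1 - lr *\<^sub>R (K + (1 / real S) *\<^sub>R (matrix_inv K ** A ** A))"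
  defines "T \<equiv> trace (A ** A ** matrix_inv K ** matrix_inv G)"
  defines "\<kappa> \<equiv> T / (1 - lr / real S * T)"
  defines "r \<equiv> trace (A ** A ** A ** matrix_inv K ** matrix_inv K ** matrix_inv K
                        ** \<Gamma> ** \<Gamma> ** matrix_inv G ** U) / (1 - lr / real S * T)"
  defines "t \<equiv> trace (A ** matrix_inv K ** matrix_inv K ** \<Gamma> ** \<Gamma> ** U)"
  defines "wstar \<equiv> matrix_inv K *v (A *v u)"
  assumes A_sym: "transpose A = A"
    and A_pd: "\<And>x. x \<noteq> 0 \<Longrightarrow> x \<bullet> (A *v x) > 0"
    and Gamma_sym: "transpose \<Gamma> = \<Gamma>"
    and comm_AG: "A ** \<Gamma> = \<Gamma> ** A"
    and lr_pos: "lr > 0"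
    and S_pos: "S \<ge> 1"
    and K_inv: "invertible K"
    and G_inv: "invertible G"
    and denom: "1 - lr / real S * T \<noteq> 0"
    \<comment> \<open>Sigma is the covariance determined by the stationarity equation\<close>
    and Sigma_sym: "transpose \<Sigma> = \<Sigma>"
    and Sigma_eq: "stationary_eq A \<Gamma> u lr S \<Sigma>"
    and Sigma_unique: "\<And>X. transpose X = X \<Longrightarrow> stationary_eq A \<Gamma> u lr S X \<Longrightarrow> X = \<Sigma>"
    \<comment> \<open>M is the stationary distribution of w: mean wstar, covariance Sigma\<close>
    and M_prob: "prob_space M"
    and int1: "\<And>i. integrable M (\<lambda>w. w$i)"
    and int2: "\<And>i j. integrable M (\<lambda>w. w$i * w$j)"
    and mean: "\<And>i. (\<integral>w. w$i \<partial>M) = wstar$i"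
    and cov: "\<And>i j. (\<integral>w. (w$i - wstar$i) * (w$j - wstar$j) \<partial>M) = \<Sigma>$i$j"
  shows "(1/2) * (\<integral>w. (w - u) \<bullet> (A *v (w - u)) \<partial>M)
           = lr / (2 * real S) * (t * \<kappa> + r) + (1/2) * t
       \<and> (A ** U = U ** A \<and> \<Gamma> ** U = U ** \<Gamma> \<longrightarrow>
         \<Sigma> = (lr / real S * t * (1 + lr * \<kappa> / real S)) *\<^sub>R (A ** matrix_inv K ** matrix_inv G)
             + (lr / real S) *\<^sub>R ((A ** A ** matrix_inv K ** matrix_inv K ** \<Gamma> ** \<Gamma> ** U
                                    + (lr * r / real S) *\<^sub>R A) ** matrix_inv K ** matrix_inv G))"
  proof -
  define Ki where "Ki = matrix_inv K"
  define Gi where "Gi = matrix_inv G"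
  have K_sym: "transpose K = K" unfolding K_def by (simp add: transpose_add' A_sym Gamma_sym)
  have KKi: "K ** Ki = mat 1" and KiK: "Ki ** K = mat 1" using inv_props[OF K_inv] by (simp_all add: Ki_def)
  have GGi: "G ** Gi = mat 1" and GiG: "Gi ** G = mat 1" using inv_props[OF G_inv] by (simp_all add: Gi_def)
  have Ki_sym: "transpose Ki = Ki" using inv_sym[OF K_inv K_sym] by (simp add: Ki_def)
  have cGA: "\<Gamma> ** A = A ** \<Gamma>" using comm_AG by simp
  have cAK: "A ** K = K ** A" unfolding K_def by (simp add: mm_lin comm_AG)
  have cGK: "\<Gamma> ** K = K ** \<Gamma>" unfolding K_def by (simp add: mm_lin cGA)
  have cAKi: "A ** Ki = Ki ** A" unfolding Ki_def by (rule inv_comm[OF K_inv cAK])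
  have cGKi: "\<Gamma> ** Ki = Ki ** \<Gamma>" unfolding Ki_def by (rule inv_comm[OF K_inv cGK])
  have cKKi: "K ** Ki = Ki ** K" using KKi KiK by simp
  note cs1 = cGA cAK cGK cAKi cGKi cKKi
  note cs1' = cs1[symmetric]
  have GG: "G = 2 *\<^sub>R mat 1 - lr *\<^sub>R (K + (1 / real S) *\<^sub>R (Ki ** A ** A))"
    using G_def Ki_def by simp
  have cAG: "A ** G = G ** A" unfolding GG
    by (intro comm_diff comm_scale comm_sum comm_mul comm_mat comm_refl cs1 cs1')
  have cGG: "\<Gamma> ** G = G ** \<Gamma>" unfolding GG
    by (intro comm_diff comm_scale comm_sum comm_mul comm_mat comm_refl cs1 cs1')
  have cKG: "K ** G = G ** K" unfolding GG
    by (intro comm_diff comm_scale comm_sum comm_mul comm_mat comm_refl cs1 cs1')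
  have cKiG: "Ki ** G = G ** Ki" unfolding GG
    by (intro comm_diff comm_scale comm_sum comm_mul comm_mat comm_refl cs1 cs1')
  have cAGi: "A ** Gi = Gi ** A" unfolding Gi_def by (rule inv_comm[OF G_inv cAG])
  have cGGi: "\<Gamma> ** Gi = Gi ** \<Gamma>" unfolding Gi_def by (rule inv_comm[OF G_inv cGG])
  have cKGi: "K ** Gi = Gi ** K" unfolding Gi_def by (rule inv_comm[OF G_inv cKG])
  have cKiGi: "Ki ** Gi = Gi ** Ki" unfolding Gi_def by (rule inv_comm[OF G_inv cKiG])
  text \<open>sorting rules, order A, Gamma, K, Ki, G, Gi\<close>
  note srt0 = cGA[symmetric] cAK[symmetric] cGK[symmetric] cAKi[symmetric] cGKi[symmetric]
     cAG[symmetric] cGG[symmetric] cKG[symmetric] cKiG[symmetric]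
     cAGi[symmetric] cGGi[symmetric] cKGi[symmetric] cKiGi[symmetric]
  note srt = srt0 srt0[THEN swap2] KKi KiK GGi GiG canc2[OF KKi] canc2[OF KiK] canc2[OF GGi] canc2[OF GiG]
     matrix_mul_assoc
  define x where "x = trace (A ** \<Sigma>)"
  define W where "W = A ** Ki ** \<Gamma> ** U ** \<Gamma> ** Ki ** A"
  define C where "C = (1 / real S) *\<^sub>R (A ** \<Sigma> ** A + x *\<^sub>R A + t *\<^sub>R A + W)"
  have eqlr: "lr *\<^sub>R (K ** \<Sigma> + \<Sigma> ** K) - lr\<^sup>2 *\<^sub>R (K ** \<Sigma> ** K) = lr\<^sup>2 *\<^sub>R C"
    using Sigma_eq unfolding stationary_eq_def noise_cov_def Let_def K_def[symmetric] U_def[symmetric]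
      t_def[symmetric] unfolding Ki_def[symmetric] x_def[symmetric] W_def[symmetric] C_def[symmetric] .
  have "lr *\<^sub>R (K ** \<Sigma> + \<Sigma> ** K - lr *\<^sub>R (K ** \<Sigma> ** K)) = lr *\<^sub>R (lr *\<^sub>R C)"
    using eqlr by (simp add: algebra_simps power2_eq_square)
  then have eq0: "K ** \<Sigma> + \<Sigma> ** K - lr *\<^sub>R (K ** \<Sigma> ** K) = lr *\<^sub>R C"
    using lr_pos scaleR_cancel_left by (metis less_irrefl)
  define Mm where "Mm = A ** Ki ** Gi"
  have key1: "Mm ** K + K ** Mm - lr *\<^sub>R (K ** Mm ** K) - (lr / real S) *\<^sub>R (A ** Mm ** A) = A"
  proof -
    have "Mm ** K + K ** Mm - lr *\<^sub>R (K ** Mm ** K) - (lr / real S) *\<^sub>R (A ** Mm ** A) = A ** G ** Gi"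
      unfolding Mm_def GG by (simp add: mm_lin srt algebra_simps, simp add: scaleR_2 mult_2_right)
    then show ?thesis by (simp add: srt)
  qed
  have trMA: "trace (Mm ** A) = T"
    unfolding Mm_def T_def unfolding Ki_def[symmetric] Gi_def[symmetric] by (simp add: srt)
  define Rn where "Rn = trace (A ** A ** A ** Ki ** Ki ** Ki ** \<Gamma> ** \<Gamma> ** Gi ** U)"
  have r_eq: "r = Rn / (1 - lr / real S * T)"
    unfolding r_def unfolding Ki_def[symmetric] Gi_def[symmetric] Rn_def ..
  have trMW: "trace (Mm ** W) = Rn"
  proof -
    have "Mm ** W = (A ** Ki ** Gi ** A ** Ki ** \<Gamma> ** U) ** (\<Gamma> ** Ki ** A)"
      unfolding Mm_def W_def by (simp only: matrix_mul_assoc)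
    then have "trace (Mm ** W) = trace ((\<Gamma> ** Ki ** A) ** (A ** Ki ** Gi ** A ** Ki ** \<Gamma> ** U))"
      by (simp only: trace_mul_sym[of "A ** Ki ** Gi ** A ** Ki ** \<Gamma> ** U"])
    also have "\<dots> = Rn" unfolding Rn_def by (simp add: srt)
    finally show ?thesis .
  qed
  have tA: "x = trace (Mm ** K ** \<Sigma>) + trace (K ** Mm ** \<Sigma>) - lr * trace (K ** Mm ** K ** \<Sigma>)
      - lr / real S * trace (A ** Mm ** A ** \<Sigma>)"
  proof -
    have "x = trace ((Mm ** K + K ** Mm - lr *\<^sub>R (K ** Mm ** K) - (lr / real S) *\<^sub>R (A ** Mm ** A)) ** \<Sigma>)"
      using key1 x_def by simp
    then show ?thesis by (simp add: mm_lin trace_add trace_sub trace_scaleR)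
  qed
  have "trace (Mm ** (K ** \<Sigma> + \<Sigma> ** K - lr *\<^sub>R (K ** \<Sigma> ** K))) = trace (Mm ** (lr *\<^sub>R C))"
    using eq0 by simp
  then have e2: "trace (Mm ** K ** \<Sigma>) + trace (Mm ** \<Sigma> ** K) - lr * trace (Mm ** K ** \<Sigma> ** K)
     = lr * (1 / real S) * (trace (Mm ** A ** \<Sigma> ** A) + x * trace (Mm ** A) + t * trace (Mm ** A) + trace (Mm ** W))"
    unfolding C_def by (simp add: mm_lin trace_add trace_sub trace_scaleR matrix_mul_assoc)
  have c1: "trace (Mm ** \<Sigma> ** K) = trace (K ** Mm ** \<Sigma>)" by (subst trace_mul_sym) (simp add: matrix_mul_assoc)
  have c2: "trace (Mm ** K ** \<Sigma> ** K) = trace (K ** Mm ** K ** \<Sigma>)" by (subst trace_mul_sym) (simp add: matrix_mul_assoc)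
  have c3: "trace (Mm ** A ** \<Sigma> ** A) = trace (A ** Mm ** A ** \<Sigma>)" by (subst trace_mul_sym) (simp add: matrix_mul_assoc)
  have xeq: "x = lr / real S * ((x + t) * T + Rn)"
  proof -
    have Spos: "real S > 0" using S_pos by simp
    from tA e2 c1 c2 c3 trMA trMW have "x + lr / real S * trace (A ** Mm ** A ** \<Sigma>) =
       lr / real S * ((x + t) * T + Rn) + lr / real S * trace (A ** Mm ** A ** \<Sigma>)"
      by (simp add: algebra_simps)
    then show ?thesis by simp
  qed
  have x_val: "x = lr / real S * (t * \<kappa> + r)"
  proof -
    have h1: "x * (1 - lr / real S * T) = lr / real S * (t * T + Rn)" using xeq by (simp add: algebra_simps)
    have h2: "t * \<kappa> + r = (t * T + Rn) / (1 - lr / real S * T)"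
      unfolding \<kappa>_def r_eq by (simp add: add_divide_distrib)
    have "x = x * (1 - lr / real S * T) / (1 - lr / real S * T)" using denom by simp
    also have "\<dots> = lr / real S * (t * T + Rn) / (1 - lr / real S * T)" by (simp only: h1)
    finally have "x = lr / real S * (t * T + Rn) / (1 - lr / real S * T)" .
    then show ?thesis unfolding h2 by simp
  qed
  have sym_dot: "transpose B = B \<Longrightarrow> (B *v y) \<bullet> z = y \<bullet> (B *v z)" for B :: "real^'n^'n" and y z
    by (metis dot_lmul_matrix transpose_matrix_vector)
  have dA: "(wstar - u) \<bullet> (A *v (wstar - u)) = t"
  proof -
    have "u = Ki *v (K *v u)" by (simp add: matrix_vector_mul_assoc KiK)
    moreover have "K *v u = A *v u + \<Gamma> *v u" unfolding K_def by (simp add: matrix_vector_mult_add_rdistrib)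
    ultimately have u_eq: "u = Ki *v (A *v u) + Ki *v (\<Gamma> *v u)"
      by (simp add: matrix_vector_right_distrib)
    have "u - Ki *v (A *v u) = Ki *v (\<Gamma> *v u)" using u_eq by (metis add_diff_cancel_left')
    then have wu: "wstar - u = - (Ki *v (\<Gamma> *v u))"
      unfolding wstar_def Ki_def[symmetric] by (metis minus_diff_eq)
    have "(wstar - u) \<bullet> (A *v (wstar - u)) = (Ki *v (\<Gamma> *v u)) \<bullet> (A *v (Ki *v (\<Gamma> *v u)))"
      unfolding wu by (rule neg_quad)
    also have "\<dots> = (\<Gamma> *v u) \<bullet> (Ki *v (A *v (Ki *v (\<Gamma> *v u))))"
      using sym_dot[OF Ki_sym] by blast
    also have "\<dots> = u \<bullet> (\<Gamma> *v (Ki *v (A *v (Ki *v (\<Gamma> *v u)))))"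
      using sym_dot[OF Gamma_sym] by blast
    also have "\<dots> = u \<bullet> ((\<Gamma> ** Ki ** A ** Ki ** \<Gamma>) *v u)"
      by (simp add: matrix_vector_mul_assoc matrix_mul_assoc)
    also have "\<Gamma> ** Ki ** A ** Ki ** \<Gamma> = A ** Ki ** Ki ** \<Gamma> ** \<Gamma>"
      by (simp add: srt)
    also have "u \<bullet> ((A ** Ki ** Ki ** \<Gamma> ** \<Gamma>) *v u) = t"
      unfolding t_def U_def trace_outer Ki_def ..
    finally show ?thesis .
  qed
  have intq: "(\<integral>w. (w - u) \<bullet> (A *v (w - u)) \<partial>M) = x + t"
    using int_quad[OF M_prob int1 int2 mean cov Sigma_sym, of u A] dA x_def by simp
  show ?thesis
  proof (intro conjI impI)
    show "(1/2) * (\<integral>w. (w - u) \<bullet> (A *v (w - u)) \<partial>M) = lr / (2 * real S) * (t * \<kappa> + r) + (1/2) * t"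
      unfolding intq x_val using S_pos by (simp add: field_simps)
  next
    assume cU: "A ** U = U ** A \<and> \<Gamma> ** U = U ** \<Gamma>"
    have cAU: "A ** U = U ** A" and cGU: "\<Gamma> ** U = U ** \<Gamma>" using cU by auto
    have cKU: "K ** U = U ** K" unfolding K_def by (simp add: mm_lin cAU cGU)
    have cKiU: "Ki ** U = U ** Ki" using inv_comm[OF K_inv cKU[symmetric]] unfolding Ki_def by simp
    note cs2 = cs1 cAU cGU cKU cKiU cs1' cAU[symmetric] cGU[symmetric] cKU[symmetric] cKiU[symmetric]
    have cGU'': "U ** G = G ** U" unfolding GG
      by (intro comm_diff comm_scale comm_sum comm_mul comm_mat comm_refl cs2)
    have cGU': "G ** U = U ** G" using cGU'' by simp
    have cGiU: "Gi ** U = U ** Gi" using inv_comm[OF G_inv cGU'[symmetric]] unfolding Gi_def by simp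
    note srtU0 = cAU cGU cKU cKiU cGU' cGiU
    note srt2 = srt srtU0[symmetric] srtU0[symmetric, THEN swap2]
    have U_sym: "transpose U = U" unfolding U_def outer_def transpose_def by (simp add: vec_eq_iff mult.commute)
    have G_sym: "transpose G = G" unfolding GG
      by (simp add: transpose_add' transpose_diff' transpose_scalar matrix_transpose_mul A_sym K_sym Ki_sym srt)
    have Gi_sym: "transpose Gi = Gi" unfolding Gi_def by (rule inv_sym[OF G_inv G_sym])
    define a where "a = lr / real S"
    define x0 where "x0 = a * (t * \<kappa> + r)"
    define c1 where "c1 = lr / real S * t * (1 + lr * \<kappa> / real S)"
    define Sg where "Sg = c1 *\<^sub>R (A ** Ki ** Gi)
             + (lr / real S) *\<^sub>R ((A ** A ** Ki ** Ki ** \<Gamma> ** \<Gamma> ** U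
                                    + (lr * r / real S) *\<^sub>R A) ** Ki ** Gi)"
    have Sg_sym: "transpose Sg = Sg"
      unfolding Sg_def
      by (simp add: transpose_add' transpose_scalar matrix_transpose_mul mm_lin A_sym Gamma_sym
          Ki_sym Gi_sym U_sym srt2)
    have T_eq: "T = trace (A ** A ** Ki ** Gi)" unfolding T_def Ki_def Gi_def ..
    have k1: "\<kappa> = T * (1 + lr * \<kappa> / real S)"
    proof -
      have "\<kappa> * (1 - lr / real S * T) = T" unfolding \<kappa>_def using denom by simp
      then show ?thesis by (simp add: algebra_simps)
    qed
    have r1: "r = Rn + lr * r / real S * T"
    proof -
      have "r * (1 - lr / real S * T) = Rn" unfolding r_eq using denom by simp
      then show ?thesis by (simp add: algebra_simps)
    qed
    have xS: "trace (A ** Sg) = x0"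
    proof -
      have "trace (A ** Sg) = c1 * T + lr / real S * (Rn + lr * r / real S * T)"
        unfolding Sg_def T_eq Rn_def by (simp add: mm_lin trace_add trace_scaleR srt2 algebra_simps)
      also have "\<dots> = lr / real S * t * (T * (1 + lr * \<kappa> / real S)) + lr / real S * (Rn + lr * r / real S * T)"
        unfolding c1_def by (simp add: algebra_simps)
      also have "\<dots> = x0" unfolding k1[symmetric] r1[symmetric] x0_def a_def by (simp add: algebra_simps)
      finally show ?thesis .
    qed
    have Lop: "K ** Sg + Sg ** K - lr *\<^sub>R (K ** Sg ** K) - a *\<^sub>R (A ** Sg ** A) = Sg ** K ** G"
      unfolding Sg_def GG a_def
      by (simp add: mm_lin srt2 algebra_simps, simp only: two_mat scaleR_scaleR, simp add: algebra_simps)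
    have SKG: "Sg ** K ** G = (c1 + a * (lr * r / real S)) *\<^sub>R A + a *\<^sub>R (A ** A ** \<Gamma> ** \<Gamma> ** Ki ** Ki ** U)"
      unfolding Sg_def a_def by (simp add: mm_lin srt2 algebra_simps)
    have Wn: "W = A ** A ** \<Gamma> ** \<Gamma> ** Ki ** Ki ** U" unfolding W_def by (simp add: srt2)
    have coef: "c1 + a * (lr * r / real S) = a * (x0 + t)"
      unfolding c1_def a_def x0_def by (simp add: algebra_simps)
    have Lop2: "K ** Sg + Sg ** K - lr *\<^sub>R (K ** Sg ** K) = a *\<^sub>R (A ** Sg ** A) + a *\<^sub>R ((x0 + t) *\<^sub>R A + W)"
    proof -
      have "K ** Sg + Sg ** K - lr *\<^sub>R (K ** Sg ** K) - a *\<^sub>R (A ** Sg ** A) = a *\<^sub>R ((x0 + t) *\<^sub>R A + W)"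
        unfolding Lop SKG coef Wn by (simp add: scaleR_add_right)
      then show ?thesis by (simp add: algebra_simps)
    qed
    have Sg_st: "stationary_eq A \<Gamma> u lr S Sg"
    proof -
      have "lr *\<^sub>R (K ** Sg + Sg ** K) - lr\<^sup>2 *\<^sub>R (K ** Sg ** K)
          = lr\<^sup>2 *\<^sub>R ((1 / real S) *\<^sub>R (A ** Sg ** A + x0 *\<^sub>R A + t *\<^sub>R A + W))"
      proof -
        have "lr *\<^sub>R (K ** Sg + Sg ** K) - lr\<^sup>2 *\<^sub>R (K ** Sg ** K)
            = lr *\<^sub>R (K ** Sg + Sg ** K - lr *\<^sub>R (K ** Sg ** K))"
          by (simp add: scaleR_diff_right power2_eq_square)
        also have "\<dots> = lr *\<^sub>R (a *\<^sub>R (A ** Sg ** A) + a *\<^sub>R ((x0 + t) *\<^sub>R A + W))"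
          unfolding Lop2 ..
        also have "\<dots> = lr\<^sup>2 *\<^sub>R ((1 / real S) *\<^sub>R (A ** Sg ** A + x0 *\<^sub>R A + t *\<^sub>R A + W))"
          unfolding a_def by (simp add: scaleR_add_right scaleR_add_left power2_eq_square algebra_simps)
        finally show ?thesis .
      qed
      then show ?thesis
        unfolding stationary_eq_def noise_cov_def Let_def K_def[symmetric] U_def[symmetric]
          t_def[symmetric] unfolding Ki_def[symmetric] W_def[symmetric] xS .
    qed
    have "Sg = \<Sigma>" by (rule Sigma_unique[OF Sg_sym Sg_st])
    then show "\<Sigma> = (lr / real S * t * (1 + lr * \<kappa> / real S)) *\<^sub>R (A ** matrix_inv K ** matrix_inv G)
             + (lr / real S) *\<^sub>R ((A ** A ** matrix_inv K ** matrix_inv K ** \<Gamma> ** \<Gamma> ** U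
                                    + (lr * r / real S) *\<^sub>R A) ** matrix_inv K ** matrix_inv G)"
      unfolding Sg_def c1_def Ki_def Gi_def by simp
  qed
qed

end
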